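(* Let $(\Omega,\mathcal F,(\mathcal F_t)_{t\ge0},\mathbb P)$ be a filtered probability space satisfying the usual conditions, $B$ an $(\mathcal F_t)$-adapted $d$-dimensional Brownian motion started at $0$, and let $\mathbf I=\{1,\dots,m\}$, $m\ge1$. For each $i\in\mathbf I$ let $\phi_i:\mathbb R\to(-\infty,+\infty]$ be convex and lower semicontinuous with $\phi_i=+\infty$ on $(-\infty,0)$ and $\phi_i$ of class $C^1$ on $(0,\infty)$; let $n_i$ be pairwise distinct unit vectors of $\mathbb R^d$ and $a_i\in\mathbb R$. Set $\Phi(x)=\sum_{i\in\mathbf I}\phi_i(x\cdot n_i-a_i)$, $D=\{x: x\cdot n_i>a_i\ \forall i\}$, assumed nonempty, so $\overline D=\{x:x\cdot n_i\ge a_i\ \forall i\}$. Let $(X,L)$ be the solution of the multivalued SDE associated with $\Phi$ (see context) with $\mathcal F_0$-measurable initial condition $X_0\in\overline D$, and set $U^i_t=X_t\cdot n_i-a_i$. Then for every $i\in\mathbf I$ and every $0<t<\infty$, almost surely $$\int_0^t|\phi_i'(U^i_s)|\,ds<\infty.$$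
   Context: A unit vector $n(x)$ is a unit inward normal to $D$ at $x\in\partial D$ if $n(x)\cdot(x-z)\le0$ for all $z\in\overline D$. The solution of the multivalued SDE associated with $\Phi$ (which exists and is unique) is the pair consisting of a continuous $(\mathcal F_t)$-adapted $\overline D$-valued process $X$ and a continuous $(\mathcal F_t)$-adapted nondecreasing process $L$ such that for all $t\ge0$: $X_t=X_0+B_t-\int_0^t\nabla\Phi(X_s)\,ds+\int_0^t n_s\,dL_s$ and $L_t=\int_0^t\mathbf 1_{\{X_s\in\partial D\}}dL_s$, where $n_s$ is $dL_s$-a.e. a unit inward normal to $D$ at $X_s$; here $\nabla\Phi(x)=\sum_i n_i\phi_i'(x\cdot n_i-a_i)$ on $D$. This solution also satisfies $\int_0^T\mathbf 1_{\{X_s\in\partial D\}}ds=0$ and $\int_0^T|\nabla\Phi(X_s)|ds<\infty$ for all $T<\infty$. *)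

theory Defs
  imports "HOL-Probability.Probability"
begin

definition filtration_on :: "'w measure \<Rightarrow> (real \<Rightarrow> 'w measure) \<Rightarrow> bool" where
  "filtration_on M F \<longleftrightarrow>
     (\<forall>t\<ge>0. space (F t) = space M \<and> sets (F t) \<subseteq> sets M) \<and>
     (\<forall>s t. 0 \<le> s \<longrightarrow> s \<le> t \<longrightarrow> sets (F s) \<subseteq> sets (F t))"

definition usual_conditions :: "'w measure \<Rightarrow> (real \<Rightarrow> 'w measure) \<Rightarrow> bool" where
  "usual_conditions M F \<longleftrightarrow>
     filtration_on M F \<and>
     (\<forall>N\<in>null_sets M. \<forall>A. A \<subseteq> N \<longrightarrow> A \<in> sets M) \<and>
     (\<forall>A. A \<subseteq> space M \<and> (\<exists>N\<in>null_sets M. A \<subseteq> N) \<longrightarrow> A \<in> sets (F 0)) \<and>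
     (\<forall>t\<ge>0. sets (F t) = (\<Inter>s\<in>{t<..}. sets (F s)))"

definition adapted :: "(real \<Rightarrow> 'w measure) \<Rightarrow> (real \<Rightarrow> 'w \<Rightarrow> 'b::topological_space) \<Rightarrow> bool" where
  "adapted F X \<longleftrightarrow> (\<forall>t\<ge>0. X t \<in> borel_measurable (F t))"

definition brownian_motion ::
  "'w measure \<Rightarrow> (real \<Rightarrow> 'w measure) \<Rightarrow> (real \<Rightarrow> 'w \<Rightarrow> real^'d) \<Rightarrow> bool" where
  "brownian_motion M F B \<longleftrightarrow>
     adapted F B \<and>
     (\<forall>\<omega>\<in>space M. B 0 \<omega> = 0 \<and> continuous_on {0..} (\<lambda>t. B t \<omega>)) \<and>
     (\<forall>s t. 0 \<le> s \<longrightarrow> s < t \<longrightarrow>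
        distributed M lborel (\<lambda>\<omega>. B t \<omega> - B s \<omega>)
          (\<lambda>x. ennreal (\<Prod>j\<in>UNIV. normal_density 0 (sqrt (t - s)) (x $ j))) \<and>
        (\<forall>A\<in>sets (F s). \<forall>C\<in>sets (borel :: (real^'d) measure).
           measure M (A \<inter> ((\<lambda>\<omega>. B t \<omega> - B s \<omega>) -` C \<inter> space M)) =
           measure M A * measure M ((\<lambda>\<omega>. B t \<omega> - B s \<omega>) -` C \<inter> space M)))"

definition ereal_convex :: "(real \<Rightarrow> ereal) \<Rightarrow> bool" where
  "ereal_convex f \<longleftrightarrow> (\<forall>x y (u::real). 0 \<le> u \<longrightarrow> u \<le> 1 \<longrightarrow>
      f (u * x + (1 - u) * y) \<le> ereal u * f x + ereal (1 - u) * f y)"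

definition ereal_lsc :: "(real \<Rightarrow> ereal) \<Rightarrow> bool" where
  "ereal_lsc f \<longleftrightarrow> (\<forall>x. f x \<le> Liminf (at x) f)"

definition unit_inward_normal :: "(real^'d) set \<Rightarrow> real^'d \<Rightarrow> real^'d \<Rightarrow> bool" where
  "unit_inward_normal D x v \<longleftrightarrow>
     x \<in> frontier D \<and> norm v = 1 \<and> (\<forall>z\<in>closure D. v \<bullet> (x - z) \<le> 0)"

text \<open>Pathwise solution of
  X_t = X_0 + B_t - int_0^t gradPhi(X_s) ds + int_0^t n_s dL_s,  L_t = int_0^t 1_{dD}(X_s) dL_s.
  dL is the Lebesgue--Stieltjes measure of L (extended by L_0 = 0 to negative times).\<close>

definition LS_measure :: "(real \<Rightarrow> real) \<Rightarrow> real measure" where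
  "LS_measure l = interval_measure (\<lambda>s. l (max s 0))"

definition msde_solution ::
  "'w measure \<Rightarrow> (real \<Rightarrow> 'w measure) \<Rightarrow> (real \<Rightarrow> 'w \<Rightarrow> real^'d) \<Rightarrow> (real^'d) set \<Rightarrow>
   (real^'d \<Rightarrow> real^'d) \<Rightarrow> (real \<Rightarrow> 'w \<Rightarrow> real^'d) \<Rightarrow> (real \<Rightarrow> 'w \<Rightarrow> real) \<Rightarrow> bool" where
  "msde_solution M F B D gradPhi X L \<longleftrightarrow>
     adapted F X \<and> adapted F L \<and>
     (\<forall>\<omega>\<in>space M. continuous_on {0..} (\<lambda>t. X t \<omega>) \<and> (\<forall>t\<ge>0. X t \<omega> \<in> closure D) \<and>
        continuous_on {0..} (\<lambda>t. L t \<omega>) \<and> mono_on {0..} (\<lambda>t. L t \<omega>) \<and> L 0 \<omega> = 0) \<and>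
     (AE \<omega> in M. (AE s in lborel. 0 \<le> s \<longrightarrow> X s \<omega> \<in> D) \<and> (\<exists>n :: real \<Rightarrow> real^'d.
        (AE s in LS_measure (\<lambda>t. L t \<omega>). 0 \<le> s \<longrightarrow> unit_inward_normal D (X s \<omega>) (n s)) \<and>
        (\<forall>t\<ge>0.
           set_integrable lborel {0..t} (\<lambda>s. gradPhi (X s \<omega>)) \<and>
           set_integrable (LS_measure (\<lambda>t. L t \<omega>)) {0..t} n \<and>
           X t \<omega> = X 0 \<omega> + B t \<omega>
                    - set_lebesgue_integral lborel {0..t} (\<lambda>s. gradPhi (X s \<omega>))
                    + set_lebesgue_integral (LS_measure (\<lambda>t. L t \<omega>)) {0..t} n \<and>
           L t \<omega> = set_lebesgue_integral (LS_measure (\<lambda>t. L t \<omega>)) {0..t}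
                      (\<lambda>s. indicator (frontier D) (X s \<omega>)))))"

end

theory Submission
  imports Defs
begin

lemma deriv_mono_aux:
  fixes \<phi> :: "real \<Rightarrow> ereal"
  assumes conv: "ereal_convex \<phi>" and fin: "\<And>x. x > 0 \<Longrightarrow> \<bar>\<phi> x\<bar> \<noteq> \<infinity>"
    and der: "\<And>x. x > 0 \<Longrightarrow> ((\<lambda>y. real_of_ereal (\<phi> y)) has_real_derivative \<phi>' x) (at x)"
    and u: "u > 0" and c: "c > 0"
  shows "(\<phi>' u - \<phi>' c) * (u - c) \<ge> 0"
proof -
  define f where "f = (\<lambda>y. real_of_ereal (\<phi> y))"
  have eq: "\<phi> x = ereal (f x)" if "x > 0" for x
    using fin[OF that] unfolding f_def by (simp add: ereal_real')
  have cv: "convex_on {0<..} f"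
  proof (rule convex_onI)
    fix t x y :: real assume t: "t > 0" "t < 1" and xy: "x \<in> {0<..}" "y \<in> {0<..}"
    have pos: "(1 - t) * x + t * y > 0" using t xy
      by (simp add: add_pos_pos)
    have "\<phi> ((1 - t) * x + (1 - (1 - t)) * y) \<le> ereal (1 - t) * \<phi> x + ereal (1 - (1 - t)) * \<phi> y"
      using conv[unfolded ereal_convex_def, rule_format, of "1 - t" x y] t by linarith
    hence "ereal (f ((1 - t) * x + t * y)) \<le> ereal ((1 - t) * f x + t * f y)"
      using eq[OF pos] eq xy by simp
    thus "f ((1 - t) *\<^sub>R x + t *\<^sub>R y) \<le> (1 - t) * f x + t * f y" by simp
  qed simp
  have d: "(f has_field_derivative \<phi>' x) (at x within {0<..})" if "x > 0" for x
    using der[OF that] unfolding f_def by (rule has_field_derivative_at_within)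
  have 1: "f u - f c \<ge> \<phi>' c * (u - c)"
    by (rule convex_on_imp_above_tangent[OF cv]) (use u c d in \<open>auto simp: interior_open\<close>)
  have 2: "f c - f u \<ge> \<phi>' u * (c - u)"
    by (rule convex_on_imp_above_tangent[OF cv]) (use u c d in \<open>auto simp: interior_open\<close>)
  from 1 2 show ?thesis by (simp add: algebra_simps)
qed

lemma aux_ex: "\<exists>n. P n \<and> (\<forall>t\<ge>0. A t \<and> Q n t) \<Longrightarrow> 0 \<le> (t::real) \<Longrightarrow> A t"
  by blast

lemma key:
  fixes Y :: "real \<Rightarrow> real^'d" and nv :: "nat \<Rightarrow> real^'d" and a :: "nat \<Rightarrow> real"
    and \<phi>' :: "nat \<Rightarrow> real \<Rightarrow> real" and I :: "nat set" and z :: "real^'d"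
  assumes fin: "finite I" and i: "i \<in> I" and t: "0 \<le> t"
    and cont: "continuous_on {0..t} Y"
    and integ: "set_integrable lborel {0..t} (\<lambda>s. G (Y s))"
    and Geq: "\<And>x. G x = (\<Sum>j\<in>I. \<phi>' j (x \<bullet> nv j - a j) *\<^sub>R nv j)"
    and AEs: "AE s in lborel. 0 \<le> s \<longrightarrow> (\<forall>j\<in>I. Y s \<bullet> nv j > a j)"
    and z: "\<And>j. j \<in> I \<Longrightarrow> z \<bullet> nv j > a j"
    and mono: "\<And>j u c. j \<in> I \<Longrightarrow> u > 0 \<Longrightarrow> c > 0 \<Longrightarrow> (\<phi>' j u - \<phi>' j c) * (u - c) \<ge> 0"
    and contp: "\<And>j. j \<in> I \<Longrightarrow> continuous_on {0<..} (\<phi>' j)"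
    and nrm: "\<And>j. j \<in> I \<Longrightarrow> norm (nv j) = 1"
  shows "(\<integral>\<^sup>+ s\<in>{0..t}. ennreal \<bar>\<phi>' i (Y s \<bullet> nv i - a i)\<bar> \<partial>lborel) < \<infinity>"
proof -
  have "compact (Y ` {0..t})" by (rule compact_continuous_image[OF cont]) simp
  then obtain R where R: "R > 0" "\<And>s. s \<in> {0..t} \<Longrightarrow> norm (Y s) \<le> R"
    using compact_imp_bounded bounded_pos by (metis imageI)
  define c where "c j = z \<bullet> nv j - a j" for j
  have cpos: "c j > 0" if "j \<in> I" for j using z[OF that] by (simp add: c_def)
  define C where "C j = \<bar>\<phi>' j (c j)\<bar> * (R + \<bar>a j\<bar> + c j)" for j
  have Cnn: "C j \<ge> 0" if "j \<in> I" for j using cpos[OF that] R by (simp add: C_def)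
  have Ubd: "\<bar>Y s \<bullet> nv j - a j\<bar> \<le> R + \<bar>a j\<bar>" if "s \<in> {0..t}" "j \<in> I" for s j
  proof -
    have "\<bar>Y s \<bullet> nv j\<bar> \<le> norm (Y s) * norm (nv j)" by (rule Cauchy_Schwarz_ineq2)
    also have "\<dots> \<le> R" using R(2)[OF that(1)] nrm[OF that(2)] by simp
    finally show ?thesis by linarith
  qed
  define g where "g j s = \<phi>' j (Y s \<bullet> nv j - a j) * ((Y s \<bullet> nv j - a j) - c j)" for j s
  have glow: "g j s \<ge> - C j" if "s \<in> {0..t}" "j \<in> I" "Y s \<bullet> nv j > a j" for s j
  proof -
    define u where "u = Y s \<bullet> nv j - a j"
    have u0: "u > 0" using that(3) by (simp add: u_def)
    have "(\<phi>' j u - \<phi>' j (c j)) * (u - c j) \<ge> 0" using mono[OF that(2) u0 cpos[OF that(2)]] .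
    hence "g j s \<ge> \<phi>' j (c j) * (u - c j)" by (simp add: g_def u_def algebra_simps)
    moreover have "\<bar>\<phi>' j (c j) * (u - c j)\<bar> \<le> C j"
    proof -
      have "\<bar>u - c j\<bar> \<le> R + \<bar>a j\<bar> + c j" using Ubd[OF that(1,2)] cpos[OF that(2)] unfolding u_def by linarith
      thus ?thesis unfolding C_def abs_mult by (simp add: mult_left_mono)
    qed
    ultimately show ?thesis by linarith
  qed
  define h where "h s = G (Y s) \<bullet> (Y s - z)" for s
  have hsum: "h s = (\<Sum>j\<in>I. g j s)" for s
  proof -
    have "h s = (\<Sum>j\<in>I. \<phi>' j (Y s \<bullet> nv j - a j) * (nv j \<bullet> (Y s - z)))"
      unfolding h_def Geq inner_sum_left by simp
    also have "\<dots> = (\<Sum>j\<in>I. g j s)"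
      by (rule sum.cong) (auto simp: g_def c_def inner_diff_right inner_commute algebra_simps)
    finally show ?thesis .
  qed
  have hbd: "\<bar>h s\<bar> \<le> norm (G (Y s)) * (R + norm z)" if "s \<in> {0..t}" for s
  proof -
    have "\<bar>h s\<bar> \<le> norm (G (Y s)) * norm (Y s - z)" unfolding h_def by (rule Cauchy_Schwarz_ineq2)
    also have "norm (Y s - z) \<le> R + norm z" using R(2)[OF that] norm_triangle_ineq4[of "Y s" z] by linarith
    hence "norm (G (Y s)) * norm (Y s - z) \<le> norm (G (Y s)) * (R + norm z)" by (simp add: mult_left_mono)
    finally show ?thesis .
  qed
  define SC where "SC = (\<Sum>j\<in>I. C j)"
  have SCnn: "C i \<le> SC" unfolding SC_def
    using Cnn fin i by (intro member_le_sum) auto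
  have SCnn0: "SC \<ge> 0" unfolding SC_def using Cnn by (simp add: sum_nonneg)
  have gabs: "\<bar>g i s\<bar> \<le> \<bar>h s\<bar> + SC" if "s \<in> {0..t}" "\<forall>j\<in>I. Y s \<bullet> nv j > a j" for s
  proof -
    have hs: "h s = g i s + (\<Sum>j\<in>I-{i}. g j s)" unfolding hsum using fin i by (simp add: sum.remove)
    have "(\<Sum>j\<in>I-{i}. g j s) \<ge> (\<Sum>j\<in>I-{i}. - C j)"
      by (rule sum_mono) (use glow that in auto)
    moreover have "(\<Sum>j\<in>I-{i}. C j) \<le> SC" unfolding SC_def
      by (rule sum_mono2) (use fin Cnn in auto)
    moreover have "g i s \<ge> - C i" using glow that i by auto
    ultimately show ?thesis using hs SCnn by (simp add: sum_negf)
  qed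
  have "compact (\<phi>' i ` {c i / 2 .. R + \<bar>a i\<bar>})"
    by (rule compact_continuous_image[OF continuous_on_subset[OF contp[OF i]]]) (use cpos[OF i] in auto)
  then obtain Mi where Mi: "Mi > 0" "\<And>u. u \<in> {c i / 2 .. R + \<bar>a i\<bar>} \<Longrightarrow> \<bar>\<phi>' i u\<bar> \<le> Mi"
    using compact_imp_bounded bounded_pos by (metis imageI real_norm_def)
  define k1 where "k1 = 2 / c i * (R + norm z)"
  define k2 where "k2 = 2 / c i * SC + Mi"
  have k1: "k1 \<ge> 0" using cpos[OF i] R by (simp add: k1_def)
  have k2: "k2 \<ge> 0" using cpos[OF i] SCnn0 Mi by (simp add: k2_def)
  have pw: "\<bar>\<phi>' i (Y s \<bullet> nv i - a i)\<bar> \<le> k1 * norm (G (Y s)) + k2"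
    if "s \<in> {0..t}" "\<forall>j\<in>I. Y s \<bullet> nv j > a j" for s
  proof -
    define u where "u = Y s \<bullet> nv i - a i"
    have ci: "c i > 0" using cpos[OF i] .
    show ?thesis
    proof (cases "u < c i / 2")
      case True
      have "\<bar>\<phi>' i u\<bar> * (c i / 2) \<le> \<bar>\<phi>' i u\<bar> * \<bar>u - c i\<bar>"
        using True by (intro mult_left_mono) (auto simp: abs_if)
      also have "\<dots> = \<bar>g i s\<bar>" by (simp add: g_def u_def abs_mult)
      also have "\<dots> \<le> norm (G (Y s)) * (R + norm z) + SC" using gabs[OF that] hbd[OF that(1)] by linarith
      finally have "\<bar>\<phi>' i u\<bar> \<le> 2 / c i * (norm (G (Y s)) * (R + norm z) + SC)"
        using ci by (simp add: field_simps)
      thus ?thesis using Mi(1) ci unfolding k1_def k2_def u_def by (simp add: algebra_simps add_divide_distrib)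
    next
      case False
      hence "u \<in> {c i / 2 .. R + \<bar>a i\<bar>}" using Ubd[OF that(1) i] unfolding u_def by auto
      hence "\<bar>\<phi>' i u\<bar> \<le> Mi" by (rule Mi(2))
      moreover have "0 \<le> k1 * norm (G (Y s)) + 2 / c i * SC" using k1 ci SCnn0 by simp
      ultimately show ?thesis unfolding k2_def u_def by linarith
    qed
  qed
  define F where "F s = k1 * norm (indicator {0..t} s *\<^sub>R G (Y s)) + k2 * indicator {0..t} s" for s
  have i1: "integrable lborel (\<lambda>s. norm (indicator {0..t} s *\<^sub>R G (Y s)))"
    using integ unfolding set_integrable_def by (rule integrable_norm)
  have i2: "integrable lborel (indicator {0..t} :: real \<Rightarrow> real)"
    by (rule integrable_real_indicator) (auto simp: emeasure_lborel_Icc t)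
  have intF: "integrable lborel F" unfolding F_def
    by (intro Bochner_Integration.integrable_add integrable_mult_right i1 i2)
  have "(\<integral>\<^sup>+ s\<in>{0..t}. ennreal \<bar>\<phi>' i (Y s \<bullet> nv i - a i)\<bar> \<partial>lborel) \<le> (\<integral>\<^sup>+ s. ennreal (norm (F s)) \<partial>lborel)"
  proof (rule nn_integral_mono_AE)
    show "AE s in lborel. ennreal \<bar>\<phi>' i (Y s \<bullet> nv i - a i)\<bar> * indicator {0..t} s \<le> ennreal (norm (F s))"
      using AEs
    proof eventually_elim
      case (elim s)
      show ?case
      proof (cases "s \<in> {0..t}")
        case True
        with elim pw[OF True] have "\<bar>\<phi>' i (Y s \<bullet> nv i - a i)\<bar> \<le> norm (F s)"
          unfolding F_def by auto
        thus ?thesis using True by (simp add: ennreal_leI)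
      qed simp
    qed
  qed
  also have "\<dots> < \<infinity>" using intF unfolding integrable_iff_bounded by simp
  finally show ?thesis .
qed

theorem lemma2:
  fixes M :: "'w measure" and F :: "real \<Rightarrow> 'w measure"
    and B :: "real \<Rightarrow> 'w \<Rightarrow> real^'d"
    and m :: nat
    and \<phi> :: "nat \<Rightarrow> real \<Rightarrow> ereal" and \<phi>' :: "nat \<Rightarrow> real \<Rightarrow> real"
    and nv :: "nat \<Rightarrow> real^'d" and a :: "nat \<Rightarrow> real"
    and D :: "(real^'d) set"
    and X :: "real \<Rightarrow> 'w \<Rightarrow> real^'d" and L :: "real \<Rightarrow> 'w \<Rightarrow> real"
  assumes "prob_space M"
    and "usual_conditions M F"
    and "brownian_motion M F B"
    and "m \<ge> 1"
    and "\<And>i. i \<in> {1..m} \<Longrightarrow> ereal_convex (\<phi> i) \<and> ereal_lsc (\<phi> i)"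
    and "\<And>i x. i \<in> {1..m} \<Longrightarrow> x < 0 \<Longrightarrow> \<phi> i x = \<infinity>"
    and "\<And>i x. i \<in> {1..m} \<Longrightarrow> x > 0 \<Longrightarrow> \<bar>\<phi> i x\<bar> \<noteq> \<infinity>"
    and "\<And>i x. i \<in> {1..m} \<Longrightarrow> x > 0 \<Longrightarrow>
           ((\<lambda>y. real_of_ereal (\<phi> i y)) has_real_derivative \<phi>' i x) (at x)"
    and "\<And>i. i \<in> {1..m} \<Longrightarrow> continuous_on {0<..} (\<phi>' i)"
    and "\<And>i. i \<in> {1..m} \<Longrightarrow> norm (nv i) = 1"
    and "inj_on nv {1..m}"
    and "D = {x. \<forall>i\<in>{1..m}. x \<bullet> nv i > a i}"
    and "D \<noteq> {}"
    and "msde_solution M F B D (\<lambda>x. \<Sum>i\<in>{1..m}. \<phi>' i (x \<bullet> nv i - a i) *\<^sub>R nv i) X L"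
  shows "\<forall>i\<in>{1..m}. \<forall>t. 0 < t \<longrightarrow>
           (AE \<omega> in M. (\<integral>\<^sup>+ s\<in>{0..t}. ennreal \<bar>\<phi>' i (X s \<omega> \<bullet> nv i - a i)\<bar> \<partial>lborel) < \<infinity>)"
  proof (intro ballI allI impI)
  fix i t assume i: "i \<in> {1..m}" and t: "(0::real) < t"
  note sol0 = assms(14)[unfolded msde_solution_def]
  note solc = conjunct1[OF conjunct2[OF conjunct2[OF sol0]]]
  note sol = conjunct2[OF conjunct2[OF conjunct2[OF sol0]]]
  obtain z where zD: "z \<in> D" using assms(13) by blast
  have z: "\<And>j. j \<in> {1..m} \<Longrightarrow> z \<bullet> nv j > a j" using zD assms(12) by auto
  have mono: "\<And>j u c. j \<in> {1..m} \<Longrightarrow> u > 0 \<Longrightarrow> c > 0 \<Longrightarrow> (\<phi>' j u - \<phi>' j c) * (u - c) \<ge> 0"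
  proof -
    fix j u c assume j: "j \<in> {1..m}" and u: "(u::real) > 0" and c: "(c::real) > 0"
    show "(\<phi>' j u - \<phi>' j c) * (u - c) \<ge> 0"
      by (rule deriv_mono_aux[OF conjunct1[OF assms(5)[OF j]] assms(7)[OF j] assms(8)[OF j] u c])
  qed
  show "AE \<omega> in M. (\<integral>\<^sup>+ s\<in>{0..t}. ennreal \<bar>\<phi>' i (X s \<omega> \<bullet> nv i - a i)\<bar> \<partial>lborel) < \<infinity>"
    using sol AE_space
  proof eventually_elim
    case (elim \<omega>)
    have hh: "set_integrable lborel {0..t}
       (\<lambda>s. (\<lambda>x. \<Sum>i\<in>{1..m}. \<phi>' i (x \<bullet> nv i - a i) *\<^sub>R nv i) (X s \<omega>))"
      using aux_ex[OF conjunct2[OF elim(1)], of t] t by simp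
    have cont: "continuous_on {0..t} (\<lambda>s. X s \<omega>)"
    proof -
      have "continuous_on {0..} (\<lambda>s. X s \<omega>)" using bspec[OF solc elim(2)] by (rule conjunct1)
      thus ?thesis by (rule continuous_on_subset) auto
    qed
    have AEs: "AE s in lborel. 0 \<le> s \<longrightarrow> (\<forall>j\<in>{1..m}. X s \<omega> \<bullet> nv j > a j)"
      using conjunct1[OF elim(1)] unfolding assms(12) mem_Collect_eq .
    show ?case
      by (rule key[where G="\<lambda>x. \<Sum>i\<in>{1..m}. \<phi>' i (x \<bullet> nv i - a i) *\<^sub>R nv i" and z=z and I="{1..m}",
            OF finite_atLeastAtMost i less_imp_le[OF t] cont hh _ AEs z mono assms(9) assms(10)]) simp
  qed
qed

end
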